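(* Let $\{A_j\}_{j=1}^m$ be Hermitian $n\times n$ matrices and $n\geq r$. If the map $\beta:\mathbb{C}^{n\times r}/U(r)\to\mathbb{R}^m$, $\beta_j(z)=\mathrm{Re}\,\mathrm{tr}(A_jzz^* )$, is injective, then $$a_0=\inf\Big\{\frac{\|\beta(x)-\beta(y)\|_2^2}{\|xx^*-yy^*\|_2^2}: x,y\in\mathbb{C}^{n\times r},\ xx^*\neq yy^*\Big\}>0.$$
   Context: $\mathbb{C}^{n\times r}/U(r)$ is the set of classes under $x\sim y$ iff $x=yU$ with $U$ unitary; $\beta$ is well defined on classes. $\|\cdot\|_2$ is the Euclidean/Frobenius norm. *)

theory Defs
  imports "HOL-Analysis.Analysis"
begin

definition cadj :: "complex^'n^'m \<Rightarrow> complex^'m^'n" where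
  "cadj A = (\<chi> i j. cnj (A $ j $ i))"

definition hermitian :: "complex^'n^'n \<Rightarrow> bool" where
  "hermitian A \<longleftrightarrow> cadj A = A"

definition unitary_mat :: "complex^'r^'r \<Rightarrow> bool" where
  "unitary_mat U \<longleftrightarrow> cadj U ** U = mat 1 \<and> U ** cadj U = mat 1"

definition ctrace :: "complex^'n^'n \<Rightarrow> complex" where
  "ctrace A = (\<Sum>i\<in>UNIV. A $ i $ i)"

definition frob_sq :: "complex^'n^'m \<Rightarrow> real" where
  "frob_sq A = (\<Sum>i\<in>UNIV. \<Sum>j\<in>UNIV. (cmod (A $ i $ j))\<^sup>2)"

definition unitary_equiv :: "complex^'r^'n \<Rightarrow> complex^'r^'n \<Rightarrow> bool" where
  "unitary_equiv x y \<longleftrightarrow> (\<exists>U::complex^'r^'r. unitary_mat U \<and> x = y ** U)"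

definition beta :: "(nat \<Rightarrow> complex^'n^'n) \<Rightarrow> nat \<Rightarrow> complex^'r^'n \<Rightarrow> real" where
  "beta A j z = Re (ctrace (A j ** (z ** cadj z)))"

definition beta_injective :: "(nat \<Rightarrow> complex^'n^'n) \<Rightarrow> nat \<Rightarrow> 'r::finite itself \<Rightarrow> bool" where
  "beta_injective A m _ \<longleftrightarrow>
     (\<forall>x y :: complex^'r^'n. (\<forall>j<m. beta A j x = beta A j y) \<longrightarrow> unitary_equiv x y)"

end

theory Submission
  imports Defs
begin

lemma hyp_outer:
  fixes c s :: real and w a1 a2 b1 b2 :: complex
  assumes "c\<^sup>2 - s\<^sup>2 = 1" "w * cnj w = 1"
  shows "(of_real c * a1 + of_real s * w * b1) * cnj (of_real c * a2 + of_real s * w * b2)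
       - (of_real s * cnj w * a1 + of_real c * b1) * cnj (of_real s * cnj w * a2 + of_real c * b2)
       = a1 * cnj a2 - b1 * cnj b2"
proof -
  have c: "(of_real c)\<^sup>2 - (of_real s)\<^sup>2 = (1::complex)"
    using assms(1) by (metis of_real_1 of_real_diff of_real_power)
  show ?thesis using c assms(2) by (simp add: algebra_simps) algebra
qed

lemma hyp_norm:
  fixes c s :: real and w a b :: complex
  assumes "cmod w = 1"
  shows "(cmod (of_real c * a + of_real s * w * b))\<^sup>2 + (cmod (of_real s * cnj w * a + of_real c * b))\<^sup>2
       = (c\<^sup>2 + s\<^sup>2) * ((cmod a)\<^sup>2 + (cmod b)\<^sup>2) + 4 * c * s * Re (cnj w * a * cnj b)"
proof -
  have w: "(Re w)\<^sup>2 + (Im w)\<^sup>2 = 1" using assms by (simp add: cmod_def)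
  show ?thesis using w unfolding cmod_power2 by (simp add: power2_eq_square algebra_simps) algebra
qed

definition gm :: "complex^'r^'n \<Rightarrow> complex^'n^'n" where
  "gm x = x ** cadj x"

lemma gm_nth: "gm x $ i $ j = (\<Sum>k\<in>UNIV. x$i$k * cnj (x$j$k))"
  by (simp add: gm_def matrix_matrix_mult_def cadj_def)

lemma norm_sq_vec: "(norm (v::'a::real_normed_vector^'n))\<^sup>2 = (\<Sum>i\<in>UNIV. (norm (v$i))\<^sup>2)"
  by (simp add: norm_vec_def L2_set_def sum_nonneg)

lemma frob_sq_norm: "frob_sq A = (norm A)\<^sup>2"
  by (simp add: frob_sq_def norm_sq_vec)

lemma sum_upd:
  fixes f :: "'k::finite \<Rightarrow> 'a::ab_group_add"
  shows "(\<Sum>k\<in>UNIV. if k = p then a else f k) = (\<Sum>k\<in>UNIV. f k) - f p + a"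
proof -
  have "(\<Sum>k\<in>UNIV. if k = p then a else f k) = a + (\<Sum>k\<in>UNIV-{p}. if k = p then a else f k)"
    by (subst sum.remove[of UNIV p]) auto
  also have "(\<Sum>k\<in>UNIV-{p}. if k = p then a else f k) = (\<Sum>k\<in>UNIV-{p}. f k)"
    by (rule sum.cong) auto
  also have "(\<Sum>k\<in>UNIV-{p}. f k) = (\<Sum>k\<in>UNIV. f k) - f p"
    by (subst sum.remove[of UNIV p]) auto
  finally show ?thesis by (simp add: algebra_simps)
qed

definition upd :: "complex^'r^'n \<Rightarrow> 'r \<Rightarrow> ('n \<Rightarrow> complex) \<Rightarrow> complex^'r^'n" where
  "upd x p v = (\<chi> i k. if k = p then v i else x$i$k)"

lemma gm_upd: "gm (upd x p v) $ i $ j = gm x $ i $ j - x$i$p * cnj (x$j$p) + v i * cnj (v j)"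
proof -
  have "gm (upd x p v) $ i $ j = (\<Sum>k\<in>UNIV. if k = p then v i * cnj (v j) else x$i$k * cnj (x$j$k))"
    unfolding gm_nth upd_def by (rule sum.cong) auto
  then show ?thesis by (simp add: sum_upd gm_nth)
qed

lemma norm_upd: "(norm (upd x p v))\<^sup>2 = (norm x)\<^sup>2 - (\<Sum>i\<in>UNIV. (cmod (x$i$p))\<^sup>2) + (\<Sum>i\<in>UNIV. (cmod (v i))\<^sup>2)"
proof -
  have "(norm (upd x p v))\<^sup>2 = (\<Sum>i\<in>UNIV. \<Sum>k\<in>UNIV. if k = p then (cmod (v i))\<^sup>2 else (cmod (x$i$k))\<^sup>2)"
    unfolding norm_sq_vec upd_def by (intro sum.cong) auto
  also have "\<dots> = (\<Sum>i\<in>UNIV. (norm (x$i))\<^sup>2 - (cmod (x$i$p))\<^sup>2 + (cmod (v i))\<^sup>2)"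
    by (simp add: sum_upd norm_sq_vec)
  finally show ?thesis by (simp add: sum.distrib sum_subtractf norm_sq_vec[of x])
qed


definition orth :: "complex^'r^'n \<Rightarrow> complex^'r^'n \<Rightarrow> bool" where
  "orth x y \<longleftrightarrow> (\<forall>p q. (\<Sum>i\<in>UNIV. cnj (x$i$p) * y$i$q) = 0)"

lemma move:
  fixes x y :: "complex^'r^'n"
  assumes "\<not> orth x y"
  shows "\<exists>(x'::complex^'r^'n) (y'::complex^'r^'n). gm x' - gm y' = gm x - gm y \<and> (norm x')\<^sup>2 + (norm y')\<^sup>2 < (norm x)\<^sup>2 + (norm y)\<^sup>2"
proof -
  obtain p q where w0: "(\<Sum>i\<in>UNIV. cnj (x$i$p) * y$i$q) \<noteq> 0" using assms orth_def by blast
  define w where "w = (\<Sum>i\<in>UNIV. cnj (x$i$p) * y$i$q)"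
  define a where "a i = x$i$p" for i
  define b where "b i = y$i$q" for i
  define N where "N = (\<Sum>i\<in>UNIV. (cmod (a i))\<^sup>2) + (\<Sum>i\<in>UNIV. (cmod (b i))\<^sup>2)"
  have wnz: "w \<noteq> 0" using w0 w_def by simp
  obtain i0 where "cnj (x$i0$p) * y$i0$q \<noteq> 0" using wnz unfolding w_def
    by (metis (no_types, lifting) sum.neutral)
  then have "a i0 \<noteq> 0" by (auto simp: a_def)
  then have "0 < (\<Sum>i\<in>UNIV. (cmod (a i))\<^sup>2)"
    by (intro sum_pos2[of UNIV i0]) auto
  moreover have "0 \<le> (\<Sum>i\<in>UNIV. (cmod (b i))\<^sup>2)" by (simp add: sum_nonneg)
  ultimately have Npos: "N > 0" unfolding N_def by linarith
  define om where "om = - cnj w / of_real (cmod w)"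
  have omw: "cnj om * cnj w = - of_real (cmod w)"
  proof -
    have "cnj om * cnj w = - (w * cnj w) / of_real (cmod w)"
      by (simp add: om_def)
    also have "w * cnj w = of_real ((cmod w)\<^sup>2)" by (metis complex_norm_square)
    finally show ?thesis using wnz by (simp add: power2_eq_square)
  qed
  have om1: "cmod om = 1" using wnz by (simp add: om_def norm_divide)
  have om1': "om * cnj om = 1"
    using om1 by (metis complex_norm_square mult.commute of_real_1 power_one)
  define s where "s = cmod w / N"
  define c where "c = sqrt (1 + s\<^sup>2)"
  have spos: "s > 0" using Npos wnz by (simp add: s_def)
  have cs: "c\<^sup>2 - s\<^sup>2 = 1" by (simp add: c_def add_nonneg_nonneg)
  have c1: "c \<ge> 1" by (simp add: c_def)
  define a' where "a' i = of_real c * a i + of_real s * om * b i" for i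
  define b' where "b' i = of_real s * cnj om * a i + of_real c * b i" for i
  define x' where "x' = upd x p a'"
  define y' where "y' = upd y q b'"
  have "gm x' - gm y' = gm x - gm y"
  proof (simp add: vec_eq_iff, intro allI)
    fix i j
    have "gm x' $ i $ j - gm y' $ i $ j = gm x $ i $ j - gm y $ i $ j
       + ((a' i * cnj (a' j) - b' i * cnj (b' j)) - (a i * cnj (a j) - b i * cnj (b j)))"
      by (simp add: x'_def y'_def gm_upd a_def b_def)
    also have "(a' i * cnj (a' j) - b' i * cnj (b' j)) = (a i * cnj (a j) - b i * cnj (b j))"
      unfolding a'_def b'_def by (rule hyp_outer[OF cs om1'])
    finally show "gm x' $ i $ j - gm y' $ i $ j = gm x $ i $ j - gm y $ i $ j" by simp
  qed
  moreover have "(norm x')\<^sup>2 + (norm y')\<^sup>2 < (norm x)\<^sup>2 + (norm y)\<^sup>2"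
  proof -
    have e1: "(norm x')\<^sup>2 + (norm y')\<^sup>2 = (norm x)\<^sup>2 + (norm y)\<^sup>2 - N
        + (\<Sum>i\<in>UNIV. (cmod (a' i))\<^sup>2 + (cmod (b' i))\<^sup>2)"
      by (simp add: x'_def y'_def norm_upd N_def a_def b_def sum.distrib)
    have "(\<Sum>i\<in>UNIV. (cmod (a' i))\<^sup>2 + (cmod (b' i))\<^sup>2)
        = (\<Sum>i\<in>UNIV. (c\<^sup>2 + s\<^sup>2) * ((cmod (a i))\<^sup>2 + (cmod (b i))\<^sup>2) + 4 * c * s * Re (cnj om * a i * cnj (b i)))"
      unfolding a'_def b'_def by (intro sum.cong refl hyp_norm[OF om1])
    also have "\<dots> = (c\<^sup>2 + s\<^sup>2) * N + 4 * c * s * Re (cnj om * (\<Sum>i\<in>UNIV. a i * cnj (b i)))"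
    proof -
      have "(\<Sum>i\<in>UNIV. (c\<^sup>2 + s\<^sup>2) * ((cmod (a i))\<^sup>2 + (cmod (b i))\<^sup>2)) = (c\<^sup>2 + s\<^sup>2) * N"
        by (simp add: N_def sum.distrib flip: sum_distrib_left)
      moreover have "(\<Sum>i\<in>UNIV. 4 * c * s * Re (cnj om * a i * cnj (b i))) = 4 * c * s * Re (cnj om * (\<Sum>i\<in>UNIV. a i * cnj (b i)))"
        by (simp only: mult.assoc flip: sum_distrib_left Re_sum)
      ultimately show ?thesis by (simp add: sum.distrib)
    qed
    also have "(\<Sum>i\<in>UNIV. a i * cnj (b i)) = cnj w"
      by (simp add: w_def a_def b_def mult.commute)
    also have "Re (cnj om * cnj w) = - cmod w" by (simp add: omw)
    finally have e2: "(\<Sum>i\<in>UNIV. (cmod (a' i))\<^sup>2 + (cmod (b' i))\<^sup>2) = (c\<^sup>2 + s\<^sup>2) * N - 4 * c * s * cmod w"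
      by simp
    have sN: "s\<^sup>2 * N = s * cmod w" using Npos by (simp add: s_def power2_eq_square)
    have "c * s * cmod w \<ge> s * cmod w" using c1 spos by (simp add: mult_right_mono)
    moreover have "s * cmod w > 0" using spos wnz by simp
    ultimately have "(c\<^sup>2 + s\<^sup>2) * N - 4 * c * s * cmod w < N"
      using cs sN by (simp add: algebra_simps)
    then show ?thesis using e1 e2 by linarith
  qed
  ultimately show ?thesis by blast
qed


lemma cmod_diff_sq: "(cmod (a - b))\<^sup>2 = (cmod a)\<^sup>2 + (cmod b)\<^sup>2 - 2 * Re (a * cnj b)"
  unfolding cmod_power2 by (simp add: power2_eq_square algebra_simps)

lemma swap4:
  fixes f :: "'i::finite \<Rightarrow> 'j::finite \<Rightarrow> 'k::finite \<Rightarrow> 'l::finite \<Rightarrow> complex"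
  shows "(\<Sum>i\<in>UNIV. \<Sum>j\<in>UNIV. \<Sum>k\<in>UNIV. \<Sum>l\<in>UNIV. f i j k l) = (\<Sum>k\<in>UNIV. \<Sum>l\<in>UNIV. \<Sum>i\<in>UNIV. \<Sum>j\<in>UNIV. f i j k l)"
proof -
  have "(\<Sum>i\<in>UNIV. \<Sum>j\<in>UNIV. \<Sum>k\<in>UNIV. \<Sum>l\<in>UNIV. f i j k l) = (\<Sum>i\<in>UNIV. \<Sum>k\<in>UNIV. \<Sum>j\<in>UNIV. \<Sum>l\<in>UNIV. f i j k l)"
    by (rule sum.cong[OF refl], rule sum.swap)
  also have "\<dots> = (\<Sum>k\<in>UNIV. \<Sum>i\<in>UNIV. \<Sum>j\<in>UNIV. \<Sum>l\<in>UNIV. f i j k l)"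
    by (rule sum.swap)
  also have "\<dots> = (\<Sum>k\<in>UNIV. \<Sum>i\<in>UNIV. \<Sum>l\<in>UNIV. \<Sum>j\<in>UNIV. f i j k l)"
    by (intro sum.cong[OF refl], rule sum.swap)
  also have "\<dots> = (\<Sum>k\<in>UNIV. \<Sum>l\<in>UNIV. \<Sum>i\<in>UNIV. \<Sum>j\<in>UNIV. f i j k l)"
    by (rule sum.cong[OF refl], rule sum.swap)
  finally show ?thesis .
qed

lemma orth_norm:
  fixes x y :: "complex^'r^'n"
  assumes "orth x y"
  shows "(norm (gm x - gm y))\<^sup>2 = (norm (gm x))\<^sup>2 + (norm (gm y))\<^sup>2"
proof -
  have z: "(\<Sum>i\<in>UNIV. \<Sum>j\<in>UNIV. gm x $ i $ j * cnj (gm y $ i $ j)) = 0"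
  proof -
    have "(\<Sum>i\<in>UNIV. \<Sum>j\<in>UNIV. gm x $ i $ j * cnj (gm y $ i $ j))
        = (\<Sum>i\<in>UNIV. \<Sum>j\<in>UNIV. \<Sum>k\<in>UNIV. \<Sum>l\<in>UNIV. (x$i$k * cnj (y$i$l)) * (cnj (x$j$k) * y$j$l))"
      by (simp add: gm_nth sum_product algebra_simps)
    also have "\<dots> = (\<Sum>k\<in>UNIV. \<Sum>l\<in>UNIV. \<Sum>i\<in>UNIV. \<Sum>j\<in>UNIV. (x$i$k * cnj (y$i$l)) * (cnj (x$j$k) * y$j$l))"
      by (rule swap4)
    also have "\<dots> = (\<Sum>k\<in>UNIV. \<Sum>l\<in>UNIV. (\<Sum>i\<in>UNIV. x$i$k * cnj (y$i$l)) * (\<Sum>j\<in>UNIV. cnj (x$j$k) * y$j$l))"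
      by (simp add: sum_product)
    also have "\<dots> = 0" using assms by (simp add: orth_def)
    finally show ?thesis .
  qed
  have "(norm (gm x - gm y))\<^sup>2 = (\<Sum>i\<in>UNIV. \<Sum>j\<in>UNIV. (cmod (gm x $ i $ j))\<^sup>2 + (cmod (gm y $ i $ j))\<^sup>2
        - 2 * Re (gm x $ i $ j * cnj (gm y $ i $ j)))"
    by (simp add: norm_sq_vec cmod_diff_sq)
  also have "\<dots> = (norm (gm x))\<^sup>2 + (norm (gm y))\<^sup>2 - 2 * Re (\<Sum>i\<in>UNIV. \<Sum>j\<in>UNIV. gm x $ i $ j * cnj (gm y $ i $ j))"
    by (simp add: norm_sq_vec sum.distrib sum_subtractf sum_distrib_left Re_sum)
  finally show ?thesis using z by simp
qed

lemma trace_bound: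
  fixes x :: "complex^'r^'n"
  shows "((norm x)\<^sup>2)\<^sup>2 \<le> real CARD('n) * (norm (gm x))\<^sup>2"
proof -
  define d where "d i = (\<Sum>k\<in>UNIV. (cmod (x$i$k))\<^sup>2)" for i
  have diag: "gm x $ i $ i = of_real (d i)" for i
    unfolding gm_nth d_def of_real_sum by (intro sum.cong refl) (metis complex_norm_square)
  have "(norm x)\<^sup>2 = (\<Sum>i\<in>UNIV. d i)" by (simp add: norm_sq_vec d_def)
  then have "((norm x)\<^sup>2)\<^sup>2 \<le> (\<Sum>i\<in>UNIV. (d i)\<^sup>2) * real CARD('n)"
    using sum_squared_le_sum_of_squares[of d UNIV] by simp
  also have "(\<Sum>i\<in>UNIV. (d i)\<^sup>2) \<le> (\<Sum>i\<in>UNIV. (norm (gm x $ i))\<^sup>2)"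
  proof (rule sum_mono)
    fix i
    have "(d i)\<^sup>2 = (cmod (gm x $ i $ i))\<^sup>2" by (simp add: diag)
    also have "\<dots> \<le> (\<Sum>j\<in>UNIV. (cmod (gm x $ i $ j))\<^sup>2)"
      by (rule member_le_sum) auto
    finally show "(d i)\<^sup>2 \<le> (norm (gm x $ i))\<^sup>2" by (simp add: norm_sq_vec)
  qed
  then have "(\<Sum>i\<in>UNIV. (d i)\<^sup>2) * real CARD('n) \<le> (norm (gm x))\<^sup>2 * real CARD('n)"
    by (simp add: norm_sq_vec[of "gm x"])
  finally show ?thesis by (simp add: mult.commute)
qed


lemma gm_eq: "gm x = (\<chi> i j. \<Sum>k\<in>UNIV. x$i$k * cnj (x$j$k))"
  by (simp add: vec_eq_iff gm_nth)

lemma continuous_gm [continuous_intros]: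
  "continuous_on S f \<Longrightarrow> continuous_on S (\<lambda>p. gm (f p :: complex^'r^'n))"
  unfolding gm_eq by (intro continuous_intros) auto

lemma fiber_min:
  fixes x y :: "complex^'r^'n"
  shows "\<exists>(x'::complex^'r^'n) (y'::complex^'r^'n). gm x' - gm y' = gm x - gm y \<and> orth x' y'"
proof -
  define D where "D = gm x - gm y"
  define R where "R = (norm x)\<^sup>2 + (norm y)\<^sup>2"
  define S where "S = {p :: (complex^'r^'n) \<times> (complex^'r^'n). gm (fst p) - gm (snd p) = D
                    \<and> (norm (fst p))\<^sup>2 + (norm (snd p))\<^sup>2 \<le> R}"
  have cl: "closed S" unfolding S_def
    by (intro closed_Collect_conj closed_Collect_eq closed_Collect_le continuous_intros)
  have bd: "bounded S"
  proof -
    have "norm p \<le> sqrt R" if "p \<in> S" for p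
    proof -
      obtain a b where pab: "p = (a, b)" by (cases p)
      have "(norm p)\<^sup>2 \<le> R" using that by (simp add: S_def norm_Pair pab)
      then show ?thesis by (simp add: real_le_rsqrt)
    qed
    then show ?thesis unfolding bounded_iff by blast
  qed
  have ne: "(x, y) \<in> S" by (simp add: S_def D_def R_def)
  have cp: "compact S" using compact_eq_bounded_closed cl bd by blast
  have ct: "continuous_on S (\<lambda>p. (norm (fst p))\<^sup>2 + (norm (snd p))\<^sup>2)"
    by (intro continuous_intros)
  obtain p0 where p0: "p0 \<in> S" and mn: "\<And>p. p \<in> S \<Longrightarrow> (norm (fst p0))\<^sup>2 + (norm (snd p0))\<^sup>2 \<le> (norm (fst p))\<^sup>2 + (norm (snd p))\<^sup>2"
    using continuous_attains_inf[OF cp _ ct] ne by blast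
  have "orth (fst p0) (snd p0)"
  proof (rule ccontr)
    assume "\<not> orth (fst p0) (snd p0)"
    from move[OF this] obtain x' y' :: "complex^'r^'n" where
      m1: "gm x' - gm y' = gm (fst p0) - gm (snd p0)" and
      m2: "(norm x')\<^sup>2 + (norm y')\<^sup>2 < (norm (fst p0))\<^sup>2 + (norm (snd p0))\<^sup>2" by blast
    have "(x', y') \<in> S" using p0 m1 m2 by (simp add: S_def)
    from mn[OF this] m2 show False by simp
  qed
  moreover have "gm (fst p0) - gm (snd p0) = gm x - gm y" using p0 by (simp add: S_def D_def)
  ultimately show ?thesis by blast
qed


definition Lf :: "(nat \<Rightarrow> complex^'n^'n) \<Rightarrow> nat \<Rightarrow> complex^'n^'n \<Rightarrow> real" where
  "Lf A j D = Re (\<Sum>i\<in>UNIV. \<Sum>k\<in>UNIV. A j $ i $ k * D $ k $ i)"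

lemma mm_diag: "(a ** b) $ i $ i = (\<Sum>k\<in>UNIV. a $ i $ k * b $ k $ i)"
  by (simp add: matrix_matrix_mult_def)

lemma beta_Lf: "beta A j x = Lf A j (gm x)"
  unfolding beta_def Lf_def ctrace_def gm_def[symmetric] mm_diag ..

lemma Re_mult_ofr: "Re (of_real t * z) = t * Re z" by simp

lemma Lf_diff: "Lf A j (D1 - D2) = Lf A j D1 - Lf A j D2"
  unfolding Lf_def vector_minus_component by (simp only: right_diff_distrib sum_subtractf minus_complex.sel)

lemma beta_diff: "beta A j x - beta A j y = Lf A j (gm x - gm y)"
  by (simp add: beta_Lf Lf_diff)

lemma Lf_scale: "Lf A j ((t::real) *\<^sub>R D) = t * Lf A j D"
  unfolding Lf_def
  apply (simp only: vector_scaleR_component)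
  apply (simp only: scaleR_conv_of_real)
  by (simp only: mult.left_commute[of _ "of_real t"] flip: sum_distrib_left Re_mult_ofr)

lemma continuous_Lf [continuous_intros]:
  "continuous_on S f \<Longrightarrow> continuous_on S (\<lambda>p. Lf A j (f p))"
  unfolding Lf_def by (intro continuous_intros)

lemma gm_scale: "gm ((t::real) *\<^sub>R x) = (t\<^sup>2) *\<^sub>R gm x"
  unfolding vec_eq_iff gm_nth vector_scaleR_component
  by (simp add: scaleR_conv_of_real sum_distrib_left power2_eq_square algebra_simps)

lemma orth_scale: "orth x y \<Longrightarrow> orth ((t::real) *\<^sub>R x) (t *\<^sub>R y)"
  unfolding orth_def vector_scaleR_component
  by (simp add: scaleR_conv_of_real mult.assoc mult.left_commute flip: sum_distrib_left)

lemma cadj_mult: "cadj (a ** b) = cadj b ** cadj a"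
  by (simp add: vec_eq_iff cadj_def matrix_matrix_mult_def mult.commute)

lemma inj_gm:
  assumes inj: "beta_injective A m TYPE('r::finite)"
    and z: "\<forall>j<m. Lf A j (gm (x::complex^'r^'n) - gm (y::complex^'r^'n)) = 0"
  shows "gm x = gm y"
proof -
  have "\<forall>j<m. beta A j x = beta A j y" using z by (simp add: beta_diff[symmetric])
  then have "unitary_equiv x y" using inj by (simp add: beta_injective_def)
  then obtain U :: "complex^'r^'r" where U: "unitary_mat U" "x = y ** U" by (auto simp: unitary_equiv_def)
  have "gm x = y ** (U ** cadj U) ** cadj y"
    by (simp add: gm_def U(2) cadj_mult matrix_mul_assoc)
  also have "\<dots> = gm y" using U(1) by (simp add: unitary_mat_def gm_def)
  finally show ?thesis .
qed


definition Rt :: "(nat \<Rightarrow> complex^'n^'n) \<Rightarrow> nat \<Rightarrow> complex^'n^'n \<Rightarrow> real" where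
  "Rt A m D = (\<Sum>j<m. (Lf A j D)\<^sup>2) / (norm D)\<^sup>2"

lemma Rt_scale:
  assumes "t > 0"
  shows "Rt A m (t *\<^sub>R D) = Rt A m D"
proof -
  have "Rt A m (t *\<^sub>R D) = (t\<^sup>2 * (\<Sum>j<m. (Lf A j D)\<^sup>2)) / (t\<^sup>2 * (norm D)\<^sup>2)"
    using assms by (simp add: Rt_def Lf_scale power_mult_distrib sum_distrib_left)
  then show ?thesis using assms by (simp add: Rt_def)
qed

lemma orth_D_nz:
  fixes x y :: "complex^'r^'n"
  assumes "orth x y" "(norm x)\<^sup>2 + (norm y)\<^sup>2 = 1"
  shows "gm x - gm y \<noteq> 0"
proof -
  have n: "(norm (gm x - gm y))\<^sup>2 = (norm (gm x))\<^sup>2 + (norm (gm y))\<^sup>2" by (rule orth_norm[OF assms(1)])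
  have t1: "((norm x)\<^sup>2)\<^sup>2 \<le> real CARD('n) * (norm (gm x))\<^sup>2" by (rule trace_bound)
  have t2: "((norm y)\<^sup>2)\<^sup>2 \<le> real CARD('n) * (norm (gm y))\<^sup>2" by (rule trace_bound)
  have "((norm x)\<^sup>2)\<^sup>2 + ((norm y)\<^sup>2)\<^sup>2 > 0"
  proof (cases "norm x = 0")
    case True then show ?thesis using assms(2) by simp
  next
    case False then show ?thesis by (simp add: add_pos_nonneg)
  qed
  then have "real CARD('n) * ((norm (gm x))\<^sup>2 + (norm (gm y))\<^sup>2) > 0"
    using t1 t2 by (simp add: distrib_left)
  then have "(norm (gm x))\<^sup>2 + (norm (gm y))\<^sup>2 > 0" by (simp add: zero_less_mult_iff)
  then have "(norm (gm x - gm y))\<^sup>2 > 0" using n by simp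
  then show ?thesis by auto
qed

lemma key_bound:
  assumes inj: "beta_injective A m TYPE('r::finite)"
  shows "\<exists>c>0. \<forall>(x::complex^'r^'n) (y::complex^'r^'n). gm x \<noteq> gm y \<longrightarrow> c \<le> Rt A m (gm x - gm y)"
proof -
  define T where "T = {p :: (complex^'r^'n) \<times> (complex^'r^'n).
      (norm (fst p))\<^sup>2 + (norm (snd p))\<^sup>2 = 1 \<and> orth (fst p) (snd p)}"
  define h where "h p = Rt A m (gm (fst p) - gm (snd p))" for p :: "(complex^'r^'n) \<times> (complex^'r^'n)"
  have Dnz: "gm (fst p) - gm (snd p) \<noteq> 0" if "p \<in> T" for p
    using that orth_D_nz by (auto simp: T_def)
  have hpos: "h p > 0" if "p \<in> T" for p
  proof -
    have "gm (fst p) \<noteq> gm (snd p)" using Dnz[OF that] by simp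
    then have "\<not> (\<forall>j<m. Lf A j (gm (fst p) - gm (snd p)) = 0)" using inj_gm[OF inj] by blast
    then obtain j where j: "j < m" "Lf A j (gm (fst p) - gm (snd p)) \<noteq> 0" by blast
    have "0 < (\<Sum>j<m. (Lf A j (gm (fst p) - gm (snd p)))\<^sup>2)"
      by (rule sum_pos2[of _ j]) (use j in auto)
    then show ?thesis using Dnz[OF that] by (simp add: h_def Rt_def)
  qed
  have cT: "\<exists>c>0. \<forall>p\<in>T. c \<le> h p"
  proof (cases "T = {}")
    case True then show ?thesis by (intro exI[of _ 1]) auto
  next
    case False
    have cl: "closed T" unfolding T_def orth_def
      by (intro closed_Collect_conj closed_Collect_all closed_Collect_eq continuous_intros)
    have bd: "bounded T"
    proof -
      have "norm p \<le> 1" if "p \<in> T" for p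
      proof -
        obtain a b where pab: "p = (a, b)" by (cases p)
        have "(norm p)\<^sup>2 \<le> 1" using that by (simp add: T_def norm_Pair pab)
        then show ?thesis by (simp add: power_le_one_iff abs_le_square_iff)
      qed
      then show ?thesis unfolding bounded_iff by blast
    qed
    have cp: "compact T" using compact_eq_bounded_closed cl bd by blast
    have ct: "continuous_on T h" unfolding h_def Rt_def
      by (intro continuous_intros) (use Dnz in auto)
    obtain p0 where "p0 \<in> T" "\<And>p. p \<in> T \<Longrightarrow> h p0 \<le> h p"
      using continuous_attains_inf[OF cp False ct] by blast
    then show ?thesis using hpos by blast
  qed
  then obtain c where c: "c > 0" "\<And>p. p \<in> T \<Longrightarrow> c \<le> h p" by blast
  have H: "c \<le> Rt A m (gm x - gm y)" if ne: "gm x \<noteq> gm y" for x y :: "complex^'r^'n"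
  proof -
    obtain x' y' :: "complex^'r^'n" where xy: "gm x' - gm y' = gm x - gm y" and o: "orth x' y'"
      using fiber_min by blast
    define f where "f = (norm x')\<^sup>2 + (norm y')\<^sup>2"
    have "f \<noteq> 0"
    proof
      assume "f = 0"
      then have "(norm x')\<^sup>2 = 0" "(norm y')\<^sup>2 = 0" unfolding f_def
        using zero_le_power2[of "norm x'"] zero_le_power2[of "norm y'"] by linarith+
      then have "x' = 0" "y' = 0" by simp_all
      then have "gm x' - gm y' = 0" by simp
      then show False using xy ne by simp
    qed
    then have fpos: "f > 0" by (simp add: f_def add_nonneg_nonneg order_le_neq_trans)
    define t where "t = 1 / sqrt f"
    have tpos: "t > 0" using fpos by (simp add: t_def)
    have "(norm (t *\<^sub>R x'))\<^sup>2 + (norm (t *\<^sub>R y'))\<^sup>2 = t\<^sup>2 * f"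
      using tpos by (simp only: norm_scaleR abs_of_pos[OF tpos] power_mult_distrib f_def distrib_left)
    also have "\<dots> = 1" using fpos unfolding t_def power_divide by simp
    finally have "(t *\<^sub>R x', t *\<^sub>R y') \<in> T"
      using orth_scale[OF o] by (simp add: T_def)
    then have "c \<le> h (t *\<^sub>R x', t *\<^sub>R y')" by (rule c(2))
    also have "h (t *\<^sub>R x', t *\<^sub>R y') = Rt A m (t\<^sup>2 *\<^sub>R (gm x' - gm y'))"
      unfolding h_def fst_conv snd_conv gm_scale scaleR_diff_right ..
    also have "\<dots> = Rt A m (gm x - gm y)" using Rt_scale[of "t\<^sup>2"] tpos xy by simp
    finally show ?thesis .
  qed
  show ?thesis
    apply (rule exI[of _ c])
    apply (intro conjI allI impI c(1))
    by (erule H)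
qed


theorem proposition4p1:
  fixes A :: "nat \<Rightarrow> complex^'n^'n" and m :: nat
  assumes herm: "\<And>j. j < m \<Longrightarrow> hermitian (A j)"
    and nr: "CARD('r::finite) \<le> CARD('n::finite)"
    and inj: "beta_injective A m TYPE('r)"
  shows "Inf {(\<Sum>j<m. (beta A j x - beta A j y)\<^sup>2) / frob_sq (x ** cadj x - y ** cadj y) |
               (x::complex^'r^'n) (y::complex^'r^'n). x ** cadj x \<noteq> y ** cadj y} > 0"
proof -
  obtain c where c: "c > 0" and H: "\<And>(x::complex^'r^'n) (y::complex^'r^'n). gm x \<noteq> gm y \<Longrightarrow> c \<le> Rt A m (gm x - gm y)"
    using key_bound[OF inj] by blast
  define S where "S = {(\<Sum>j<m. (beta A j x - beta A j y)\<^sup>2) / frob_sq (x ** cadj x - y ** cadj y) |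
               (x::complex^'r^'n) (y::complex^'r^'n). x ** cadj x \<noteq> y ** cadj y}"
  have elem: "c \<le> v" if vS: "v \<in> S" for v
  proof -
    obtain x y :: "complex^'r^'n" where v: "v = (\<Sum>j<m. (beta A j x - beta A j y)\<^sup>2) / frob_sq (x ** cadj x - y ** cadj y)"
      and ne: "x ** cadj x \<noteq> y ** cadj y" using vS unfolding S_def by blast
    have "v = Rt A m (gm x - gm y)" unfolding v Rt_def beta_diff frob_sq_norm gm_def ..
    with H[of x y] ne show ?thesis by (simp add: gm_def)
  qed
  have "S \<noteq> {}"
  proof -
    define x0 :: "complex^'r^'n" where "x0 = (\<chi> i k. 1)"
    obtain i :: 'n where True by blast
    have "gm x0 $ i $ i = of_nat CARD('r)" by (simp add: gm_nth x0_def)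
    moreover have "gm (0::complex^'r^'n) $ i $ i = 0" by (simp add: gm_nth)
    ultimately have "gm x0 \<noteq> gm (0::complex^'r^'n)" by auto
    then have "x0 ** cadj x0 \<noteq> (0::complex^'r^'n) ** cadj 0" by (simp add: gm_def)
    then show ?thesis unfolding S_def by blast
  qed
  then have "c \<le> Inf S" using elem by (intro cInf_greatest) auto
  then show ?thesis using c unfolding S_def by linarith
qed

end
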